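(* Let $H$ and $H'$ be periodic generalized Jacobi matrices whose $m$-functions coincide (in a neighborhood of infinity). Then $H=H'$; i.e. the $m$-function of a periodic generalized Jacobi matrix determines it uniquely.
   Context: For a real monic polynomial $p(\lambda)=\lambda^n+p_{n-1}\lambda^{n-1}+\dots+p_0$, its companion matrix is the $n\times n$ matrix $C_p$ with ones on the subdiagonal, last column $(-p_0,\dots,-p_{n-1})^\top$, zeros elsewhere; its symmetrizator is the Hankel matrix $E_p$ with $(i,k)$ entry $p_{i+k-1}$ if $i+k-1\le n$ ($p_n=1$) and $0$ otherwise. Given real monic polynomials $p_j$ of degree $k_j\ge1$, signs $\varepsilon_j\in\{\pm1\}$ and $b_j>0$ ($j\in\mathbb{Z}_+$), the generalized Jacobi matrix $H$ is the semi-infinite block tridiagonal matrix with diagonal blocks $C_{p_j}$, subdiagonal blocks $B_j$ ($k_{j+1}\times k_j$) with only nonzero entry $b_j$ at position $(1,k_j)$, and superdiagonal blocks $\widetilde B_j$ ($k_j\times k_{j+1}$) with only nonzero entry $\varepsilon_j\varepsilon_{j+1}b_j$ at position $(1,k_{j+1})$. It is periodic ($s$-periodic for some $s\in\mathbb{N}$) if $p_{j+s}=p_j$, $b_{j+s}=b_j$, $\varepsilon_{j+s}=\varepsilon_j$ for all $j$. With $G=\mathrm{diag}(\varepsilon_0E_{p_0}^{-1},\varepsilon_1E_{p_1}^{-1},\dots)$ and $[x,y]=(Gx,y)_{\ell^2}$, the $m$-function of $H$ is $m(\lambda)=[(H-\lambda)^{-1}e,e]$, $e=(1,0,0,\dots)^\top$,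 for $|\lambda|>\|H\|$. *)

theory Defs
  imports Complex_Main "HOL-Computational_Algebra.Polynomial"
begin

text \<open>Block offsets: block j occupies rows/columns off p j, ..., off p (j+1) - 1,
  where the size of block j is k_j = degree (p j).  All indices are 0-based.\<close>

definition blk_off :: "(nat \<Rightarrow> real poly) \<Rightarrow> nat \<Rightarrow> nat" where
  "blk_off p j = (\<Sum>i<j. degree (p i))"

definition blk_idx :: "(nat \<Rightarrow> real poly) \<Rightarrow> nat \<Rightarrow> nat" where
  "blk_idx p n = (LEAST j. n < blk_off p (Suc j))"

definition blk_loc :: "(nat \<Rightarrow> real poly) \<Rightarrow> nat \<Rightarrow> nat" where
  "blk_loc p n = n - blk_off p (blk_idx p n)"

text \<open>Entries of the generalized Jacobi matrix H: diagonal blocks are companion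
  matrices C_{p_j}; subdiagonal block B_j has b_j at (1,k_j); superdiagonal block
  B~_j has eps_j eps_{j+1} b_j at (1,k_{j+1}) (1-based positions).\<close>

definition gjm :: "(nat \<Rightarrow> real poly) \<Rightarrow> (nat \<Rightarrow> real) \<Rightarrow> (nat \<Rightarrow> real) \<Rightarrow> nat \<Rightarrow> nat \<Rightarrow> real" where
  "gjm p eps b r c =
    (let j = blk_idx p r; l = blk_idx p c; a = blk_loc p r; d = blk_loc p c;
         k = degree (p l) in
     if l = j then (if a = Suc d then 1 else 0) - (if d = k - 1 then coeff (p j) a else 0)
     else if l = Suc j then (if a = 0 \<and> d = k - 1 then eps j * eps (Suc j) * b j else 0)
     else if j = Suc l then (if a = 0 \<and> d = k - 1 then b l else 0)
     else 0)"

text \<open>Symmetrizator E_p (Hankel, (i,k) entry p_{i+k-1}, 1-based; p_n = 1, zero beyond)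
  and its inverse (on the k x k block).\<close>

definition symm :: "real poly \<Rightarrow> nat \<Rightarrow> nat \<Rightarrow> real" where
  "symm q a d = coeff q (a + d + 1)"

definition symm_inv :: "real poly \<Rightarrow> nat \<Rightarrow> nat \<Rightarrow> real" where
  "symm_inv q = (SOME F. \<forall>a<degree q. \<forall>d<degree q.
      (\<Sum>c<degree q. symm q a c * F c d) = (if a = d then 1 else 0))"

definition Gmat :: "(nat \<Rightarrow> real poly) \<Rightarrow> (nat \<Rightarrow> real) \<Rightarrow> nat \<Rightarrow> nat \<Rightarrow> real" where
  "Gmat p eps r c =
    (if blk_idx p r = blk_idx p c
     then eps (blk_idx p r) * symm_inv (p (blk_idx p r)) (blk_loc p r) (blk_loc p c)
     else 0)"

definition l2 :: "(nat \<Rightarrow> complex) \<Rightarrow> bool" where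
  "l2 x \<longleftrightarrow> summable (\<lambda>n. (cmod (x n))\<^sup>2)"

definition l2norm :: "(nat \<Rightarrow> complex) \<Rightarrow> real" where
  "l2norm x = sqrt (\<Sum>n. (cmod (x n))\<^sup>2)"

definition mat_app :: "(nat \<Rightarrow> nat \<Rightarrow> real) \<Rightarrow> (nat \<Rightarrow> complex) \<Rightarrow> nat \<Rightarrow> complex" where
  "mat_app A x r = (\<Sum>c. complex_of_real (A r c) * x c)"

definition op_norm :: "(nat \<Rightarrow> nat \<Rightarrow> real) \<Rightarrow> real" where
  "op_norm A = Sup {l2norm (mat_app A x) | x. l2 x \<and> l2norm x \<le> 1}"

definition e0 :: "nat \<Rightarrow> complex" where
  "e0 n = (if n = 0 then 1 else 0)"

definition resolvent_e :: "(nat \<Rightarrow> nat \<Rightarrow> real) \<Rightarrow> complex \<Rightarrow> nat \<Rightarrow> complex" where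
  "resolvent_e A z = (THE x. l2 x \<and> (\<forall>r. mat_app A x r - z * x r = e0 r))"

definition indef_ip :: "(nat \<Rightarrow> nat \<Rightarrow> real) \<Rightarrow> (nat \<Rightarrow> complex) \<Rightarrow> (nat \<Rightarrow> complex) \<Rightarrow> complex" where
  "indef_ip G x y = (\<Sum>n. mat_app G x n * cnj (y n))"

definition mfun :: "(nat \<Rightarrow> real poly) \<Rightarrow> (nat \<Rightarrow> real) \<Rightarrow> (nat \<Rightarrow> real) \<Rightarrow> complex \<Rightarrow> complex" where
  "mfun p eps b z = indef_ip (Gmat p eps) (resolvent_e (gjm p eps b) z) e0"

definition gj_data :: "(nat \<Rightarrow> real poly) \<Rightarrow> (nat \<Rightarrow> real) \<Rightarrow> (nat \<Rightarrow> real) \<Rightarrow> bool" where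
  "gj_data p eps b \<longleftrightarrow> (\<forall>j. lead_coeff (p j) = 1 \<and> degree (p j) \<ge> 1 \<and>
      (eps j = 1 \<or> eps j = -1) \<and> b j > 0)"

definition gj_periodic :: "(nat \<Rightarrow> real poly) \<Rightarrow> (nat \<Rightarrow> real) \<Rightarrow> (nat \<Rightarrow> real) \<Rightarrow> bool" where
  "gj_periodic p eps b \<longleftrightarrow> (\<exists>s>0. \<forall>j. p (j + s) = p j \<and> b (j + s) = b j \<and> eps (j + s) = eps j)"

end

theory Submission
  imports Defs "HOL-Computational_Algebra.Fundamental_Theorem_Algebra"
begin


lemma poly_small_zero:
  fixes q :: "complex poly"
  assumes h: "\<forall>z. cmod z \<ge> R \<longrightarrow> cmod (poly q z) \<le> C / cmod z"
  shows "q = 0"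
proof (cases q)
  case (pCons a q0)
  show ?thesis
  proof (cases "q0 = 0")
    case False
    obtain r where r: "\<forall>z. r \<le> cmod z \<longrightarrow> 1 \<le> cmod (poly (pCons a q0) z)"
      using poly_infinity[OF False, of 1 a] by blast
    define t where "t = max r (max R (\<bar>C\<bar> + 1))"
    have t1: "t \<ge> \<bar>C\<bar> + 1" "t \<ge> r" "t \<ge> R" by (auto simp: t_def)
    let ?z = "complex_of_real t"
    have nz: "cmod ?z = t" using t1 by simp
    have "1 \<le> cmod (poly q ?z)" using r t1 nz pCons by auto
    also have "\<dots> \<le> C / t" using h t1(3) nz by metis
    also have "\<dots> < 1" using t1 by (simp add: divide_less_eq abs_if split: if_splits)
    finally show ?thesis by simp
  next
    case True
    then have pq: "\<And>z. poly q z = a" using pCons by simp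
    show ?thesis
    proof (rule ccontr)
      assume "q \<noteq> 0"
      then have a0: "a \<noteq> 0" using pCons True by simp
      define t where "t = max R (\<bar>C\<bar> / cmod a + 1)"
      have t1: "t \<ge> \<bar>C\<bar> / cmod a + 1" "t \<ge> R" by (auto simp: t_def)
      have tpos: "t > 0" using t1(1) by (smt (verit) divide_nonneg_nonneg norm_ge_zero abs_ge_zero)
      let ?z = "complex_of_real t"
      have nz: "cmod ?z = t" using tpos by simp
      have "cmod a \<le> C / t" using h t1 nz pq by metis
      hence "cmod a * t \<le> C" using tpos by (simp add: le_divide_eq)
      moreover have "cmod a * t \<ge> cmod a * (\<bar>C\<bar> / cmod a + 1)"
        using t1 a0 by (simp add: mult_left_mono)
      moreover have "cmod a * (\<bar>C\<bar> / cmod a + 1) = \<bar>C\<bar> + cmod a" using a0 by (simp add: field_simps)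
      ultimately show False using a0 by (smt (verit) zero_less_norm_iff)
    qed
  qed
qed

locale twoseq =
  fixes P P' :: "nat \<Rightarrow> real poly" and \<alpha> \<alpha>' :: "nat \<Rightarrow> real"
    and \<mu> \<mu>' :: "nat \<Rightarrow> complex \<Rightarrow> complex" and R0 :: real
  assumes monic: "\<And>j. lead_coeff (P j) = 1" "\<And>j. lead_coeff (P' j) = 1"
    and anz: "\<And>j. \<alpha> j \<noteq> 0" "\<And>j. \<alpha>' j \<noteq> 0"
    and R0: "R0 > 0"
    and rec: "\<And>j z. cmod z \<ge> R0 \<Longrightarrow>
       1 = - \<mu> j z * (poly (map_poly of_real (P j)) z + of_real (\<alpha> j) * \<mu> (Suc j) z)"
    and rec': "\<And>j z. cmod z \<ge> R0 \<Longrightarrow>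
       1 = - \<mu>' j z * (poly (map_poly of_real (P' j)) z + of_real (\<alpha>' j) * \<mu>' (Suc j) z)"
    and bnd: "\<And>j z. cmod z \<ge> R0 \<Longrightarrow> cmod (\<mu> j z) \<le> 2 / cmod z"
    and bnd': "\<And>j z. cmod z \<ge> R0 \<Longrightarrow> cmod (\<mu>' j z) \<le> 2 / cmod z"
begin

lemma step:
  assumes l0: "lam \<noteq> 0" and ev: "\<forall>z. cmod z \<ge> R \<longrightarrow> \<mu>' j z = lam * \<mu> j z"
  shows "lam = 1 \<and> P j = P' j \<and>
     (\<forall>z. cmod z \<ge> max R R0 \<longrightarrow> \<mu>' (Suc j) z = of_real (\<alpha> j / \<alpha>' j) * \<mu> (Suc j) z)"
proof -
  define q where "q = map_poly complex_of_real (P j) - smult lam (map_poly of_real (P' j))"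
  define C where "C = cmod lam * \<bar>\<alpha>' j\<bar> * 2 + \<bar>\<alpha> j\<bar> * 2"
  have key: "poly (map_poly of_real (P j)) z + of_real (\<alpha> j) * \<mu> (Suc j) z =
     lam * (poly (map_poly of_real (P' j)) z + of_real (\<alpha>' j) * \<mu>' (Suc j) z)"
    if z: "cmod z \<ge> max R R0" for z
  proof -
    have e1: "1 = - \<mu> j z * (poly (map_poly of_real (P j)) z + of_real (\<alpha> j) * \<mu> (Suc j) z)"
      using rec z by auto
    have e2: "1 = - (lam * \<mu> j z) * (poly (map_poly of_real (P' j)) z + of_real (\<alpha>' j) * \<mu>' (Suc j) z)"
      using rec'[of z j] ev z by auto
    have nz: "\<mu> j z \<noteq> 0" using e1 by auto
    have "\<mu> j z * (poly (map_poly of_real (P j)) z + of_real (\<alpha> j) * \<mu> (Suc j) z) =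
       \<mu> j z * (lam * (poly (map_poly of_real (P' j)) z + of_real (\<alpha>' j) * \<mu>' (Suc j) z))"
    proof -
      have "\<mu> j z * (poly (map_poly of_real (P j)) z + of_real (\<alpha> j) * \<mu> (Suc j) z) = -1"
        using e1 by (metis minus_equation_iff mult_minus_left)
      moreover have "\<mu> j z * (lam * (poly (map_poly of_real (P' j)) z + of_real (\<alpha>' j) * \<mu>' (Suc j) z)) = -1"
        using e2 by (metis minus_equation_iff mult_minus_left mult.assoc mult.commute)
      ultimately show ?thesis by simp
    qed
    then show ?thesis using nz by simp
  qed
  have "\<forall>z. cmod z \<ge> max R R0 \<longrightarrow> cmod (poly q z) \<le> C / cmod z"
  proof (intro allI impI)
    fix z :: complex assume z: "cmod z \<ge> max R R0"
    have zp: "cmod z > 0" using z R0 by linarith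
    have "poly q z = lam * of_real (\<alpha>' j) * \<mu>' (Suc j) z - of_real (\<alpha> j) * \<mu> (Suc j) z"
      using key[OF z] by (simp add: q_def algebra_simps)
    hence "cmod (poly q z) \<le> cmod (lam * of_real (\<alpha>' j) * \<mu>' (Suc j) z) + cmod (of_real (\<alpha> j) * \<mu> (Suc j) z)"
      using norm_triangle_ineq4 by simp
    also have "\<dots> = cmod lam * \<bar>\<alpha>' j\<bar> * cmod (\<mu>' (Suc j) z) + \<bar>\<alpha> j\<bar> * cmod (\<mu> (Suc j) z)"
      by (simp add: norm_mult)
    also have "\<dots> \<le> cmod lam * \<bar>\<alpha>' j\<bar> * (2 / cmod z) + \<bar>\<alpha> j\<bar> * (2 / cmod z)"
      using bnd[of z "Suc j"] bnd'[of z "Suc j"] z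
      by (intro add_mono mult_left_mono) auto
    also have "\<dots> = C / cmod z" by (simp add: C_def add_divide_distrib)
    finally show "cmod (poly q z) \<le> C / cmod z" .
  qed
  hence q0: "q = 0" by (rule poly_small_zero)
  hence eq: "map_poly complex_of_real (P j) = smult lam (map_poly of_real (P' j))"
    by (simp add: q_def)
  have "lead_coeff (map_poly complex_of_real (P j)) = 1"
    using monic(1)[of j] by (subst lead_coeff_map_poly_nz) auto
  moreover have "lead_coeff (smult lam (map_poly complex_of_real (P' j))) = lam"
    using monic(2)[of j] l0 by (subst lead_coeff_smult, subst lead_coeff_map_poly_nz) auto
  ultimately have l1: "lam = 1" using eq by simp
  hence "map_poly complex_of_real (P j) = map_poly complex_of_real (P' j)" using eq by simp
  hence pe: "P j = P' j"
  proof -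
    assume h: "map_poly complex_of_real (P j) = map_poly complex_of_real (P' j)"
    show ?thesis
    proof (rule poly_eqI)
      fix n
      have "coeff (map_poly complex_of_real (P j)) n = coeff (map_poly complex_of_real (P' j)) n"
        using h by simp
      thus "coeff (P j) n = coeff (P' j) n" by (simp add: coeff_map_poly)
    qed
  qed
  have "\<mu>' (Suc j) z = of_real (\<alpha> j / \<alpha>' j) * \<mu> (Suc j) z" if z: "cmod z \<ge> max R R0" for z
  proof -
    have "of_real (\<alpha> j) * \<mu> (Suc j) z = of_real (\<alpha>' j) * \<mu>' (Suc j) z"
      using key[OF z] l1 pe by simp
    then show ?thesis using anz(2)[of j] by (simp add: field_simps)
  qed
  then show ?thesis using l1 pe by blast
qed

lemma main:
  assumes base: "lam \<noteq> 0" "\<forall>z. cmod z \<ge> R \<longrightarrow> \<mu>' 0 z = lam * \<mu> 0 z"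
  shows "P j = P' j \<and> \<alpha> j = \<alpha>' j"
proof -
  have Q: "\<exists>lam R. lam \<noteq> 0 \<and> (\<forall>z. cmod z \<ge> R \<longrightarrow> \<mu>' i z = lam * \<mu> i z)" for i
  proof (induction i)
    case 0 then show ?case using base by blast
  next
    case (Suc i)
    then obtain lam R where "lam \<noteq> 0" "\<forall>z. cmod z \<ge> R \<longrightarrow> \<mu>' i z = lam * \<mu> i z" by blast
    from step[OF this] have "\<forall>z. cmod z \<ge> max R R0 \<longrightarrow> \<mu>' (Suc i) z = of_real (\<alpha> i / \<alpha>' i) * \<mu> (Suc i) z"
      by blast
    moreover have "complex_of_real (\<alpha> i / \<alpha>' i) \<noteq> 0" using anz by simp
    ultimately show ?case by blast
  qed
  obtain lam R where "lam \<noteq> 0" "\<forall>z. cmod z \<ge> R \<longrightarrow> \<mu>' j z = lam * \<mu> j z" using Q by blast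
  from step[OF this] have pj: "P j = P' j" and
    ev: "\<forall>z. cmod z \<ge> max R R0 \<longrightarrow> \<mu>' (Suc j) z = of_real (\<alpha> j / \<alpha>' j) * \<mu> (Suc j) z" by blast+
  have "complex_of_real (\<alpha> j / \<alpha>' j) \<noteq> 0" using anz by simp
  from step[OF this ev] have "complex_of_real (\<alpha> j / \<alpha>' j) = 1" by blast
  hence "\<alpha> j / \<alpha>' j = 1" by simp
  hence "\<alpha> j = \<alpha>' j" using anz(2)[of j] by (simp add: divide_eq_1_iff)
  with pj show ?thesis by blast
qed

end


locale band =
  fixes A :: "nat \<Rightarrow> nat \<Rightarrow> real" and W :: nat and B :: real
  assumes band: "\<And>r c. r + W < c \<or> c + W < r \<Longrightarrow> A r c = 0"
    and bnd: "\<And>r c. \<bar>A r c\<bar> \<le> B"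
begin

definition M :: real where "M = real (2*W+1) * max B 0 + 1"

lemma M_pos: "M \<ge> 1" by (simp add: M_def)

definition win :: "nat \<Rightarrow> nat set" where "win r = {r - W .. r + W}"

lemma zero_out: "c \<notin> win r \<Longrightarrow> A r c = 0"
  by (rule band) (auto simp: win_def)

lemma mat_app_win: "mat_app A x r = (\<Sum>c\<in>win r. complex_of_real (A r c) * x c)"
  unfolding mat_app_def by (rule suminf_finite) (auto simp: win_def zero_out)

lemma summable_row: "summable (\<lambda>c. complex_of_real (A r c) * x c)"
  by (rule summable_finite[of "win r"]) (auto simp: win_def zero_out)

lemma card_win: "card (win r) \<le> 2*W+1"
  by (simp add: win_def)

lemma row_bound:
  assumes "\<And>c. cmod (x c) \<le> S"
  shows "cmod (\<Sum>c\<in>win r. complex_of_real (A r c) * x c) \<le> M * S"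
proof -
  have S0: "S \<ge> 0" using assms[of 0] norm_ge_zero by (meson order_trans)
  have "cmod (\<Sum>c\<in>win r. complex_of_real (A r c) * x c) \<le> (\<Sum>c\<in>win r. cmod (complex_of_real (A r c) * x c))"
    by (rule norm_sum)
  also have "\<dots> \<le> (\<Sum>c\<in>win r. max B 0 * S)"
  proof (rule sum_mono)
    fix c
    have "cmod (complex_of_real (A r c) * x c) = \<bar>A r c\<bar> * cmod (x c)" by (simp add: norm_mult)
    also have "\<dots> \<le> max B 0 * S" using bnd[of r c] assms[of c] S0
      by (intro mult_mono) auto
    finally show "cmod (complex_of_real (A r c) * x c) \<le> max B 0 * S" .
  qed
  also have "\<dots> = real (card (win r)) * (max B 0 * S)" by simp
  also have "\<dots> \<le> real (2*W+1) * (max B 0 * S)"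
    using card_win[of r] S0 by (intro mult_right_mono) auto
  also have "\<dots> \<le> M * S" using S0 by (simp add: M_def algebra_simps)
  finally show ?thesis .
qed

lemma mat_app_bound:
  assumes "\<And>c. cmod (x c) \<le> S"
  shows "cmod (mat_app A x r) \<le> M * S"
  using row_bound[OF assms] by (simp add: mat_app_win)

primrec vv :: "nat \<Rightarrow> nat \<Rightarrow> nat \<Rightarrow> complex" where
  "vv t 0 = (\<lambda>r. if r = t then 1 else 0)"
| "vv t (Suc n) = (\<lambda>r. \<Sum>c\<in>win r. complex_of_real (A r c) * vv t n c)"

lemma vv_bound: "cmod (vv t n r) \<le> M ^ n"
proof (induction n arbitrary: r)
  case 0 then show ?case by simp
next
  case (Suc n)
  have "cmod (vv t (Suc n) r) \<le> M * M ^ n" using row_bound[of "vv t n", OF Suc.IH] by simp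
  then show ?case by simp
qed

lemma vv_supp: "vv t n r \<noteq> 0 \<Longrightarrow> r \<le> t + n * W"
proof (induction n arbitrary: r)
  case 0 then show ?case by (simp split: if_splits)
next
  case (Suc n)
  then obtain c where c: "c \<in> win r" "vv t n c \<noteq> 0"
    by (metis (mono_tags, lifting) mult_zero_right sum.neutral vv.simps(2))
  have "c \<le> t + n * W" using Suc.IH c(2) .
  moreover have "r \<le> c + W" using c(1) by (auto simp: win_def)
  ultimately show ?case by simp
qed

definition sol :: "nat \<Rightarrow> complex \<Rightarrow> nat \<Rightarrow> complex" where
  "sol t z r = - (\<Sum>n. vv t n r / z ^ Suc n)"

lemma term_bound:
  assumes z: "cmod z \<ge> 2 * M"
  shows "cmod (vv t n r / z ^ n) \<le> (1/2) ^ n"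
proof -
  have zp: "cmod z > 0" using z M_pos by linarith
  have "cmod (vv t n r / z ^ n) = cmod (vv t n r) / cmod z ^ n" by (simp add: norm_divide norm_power)
  also have "\<dots> \<le> M ^ n / cmod z ^ n" using vv_bound zp by (intro divide_right_mono) auto
  also have "\<dots> = (M / cmod z) ^ n" by (simp add: power_divide)
  also have "\<dots> \<le> (1/2) ^ n"
    using z zp M_pos by (intro power_mono) (auto simp: divide_le_eq)
  finally show ?thesis .
qed

lemma summ0:
  assumes z: "cmod z \<ge> 2 * M"
  shows "summable (\<lambda>n. vv t n r / z ^ n)"
  by (rule summable_comparison_test[of _ "\<lambda>n. (1/2::real)^n"])
     (use term_bound[OF z] in \<open>auto intro: summable_geometric\<close>)

lemma summ1:
  assumes z: "cmod z \<ge> 2 * M"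
  shows "summable (\<lambda>n. vv t n r / z ^ Suc n)"
proof -
  have "summable (\<lambda>n. vv t n r / z ^ n / z)" using summable_divide[OF summ0[OF z]] .
  then show ?thesis by (simp add: field_simps)
qed

lemma sol_bound:
  assumes z: "cmod z \<ge> 2 * M"
  shows "cmod (sol t z r) \<le> 2 / cmod z"
proof -
  have zp: "cmod z > 0" using z M_pos by linarith
  have tb: "cmod (vv t n r / z ^ Suc n) \<le> (1/2) ^ n / cmod z" for n
  proof -
    have "cmod (vv t n r / z ^ Suc n) = cmod (vv t n r / z ^ n) / cmod z"
      by (simp add: norm_divide norm_mult norm_power)
    then show ?thesis using term_bound[OF z, of t n r] zp by (simp add: divide_right_mono)
  qed
  have sg: "summable (\<lambda>n. (1/2::real) ^ n / cmod z)"
    by (intro summable_divide summable_geometric) simp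
  have "cmod (sol t z r) = cmod (\<Sum>n. vv t n r / z ^ Suc n)" by (simp add: sol_def)
  also have "\<dots> \<le> (\<Sum>n. (1/2::real) ^ n / cmod z)"
    by (rule norm_suminf_le[OF tb sg]) 
  also have "\<dots> = 2 / cmod z"
    using suminf_divide[OF summable_geometric[of "1/2::real"], of "cmod z"] suminf_geometric[of "1/2::real"]
    by simp
  finally show ?thesis .
qed

lemma sol_eq:
  assumes z: "cmod z \<ge> 2 * M"
  shows "mat_app A (sol t z) r - z * sol t z r = (if r = t then 1 else 0)"
proof -
  have zp: "z \<noteq> 0" using z M_pos by auto
  have "mat_app A (sol t z) r = (\<Sum>c\<in>win r. complex_of_real (A r c) * sol t z c)"
    by (rule mat_app_win)
  also have "\<dots> = (\<Sum>c\<in>win r. - (\<Sum>n. complex_of_real (A r c) * (vv t n c / z ^ Suc n)))"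
  proof (rule sum.cong[OF refl])
    fix c
    show "complex_of_real (A r c) * sol t z c = - (\<Sum>n. complex_of_real (A r c) * (vv t n c / z ^ Suc n))"
      unfolding sol_def by (subst suminf_mult[OF summ1[OF z]]) simp
  qed
  also have "\<dots> = - (\<Sum>c\<in>win r. \<Sum>n. complex_of_real (A r c) * (vv t n c / z ^ Suc n))"
    by (simp add: sum_negf)
  also have "(\<Sum>c\<in>win r. \<Sum>n. complex_of_real (A r c) * (vv t n c / z ^ Suc n))
      = (\<Sum>n. \<Sum>c\<in>win r. complex_of_real (A r c) * (vv t n c / z ^ Suc n))"
    by (rule suminf_sum[symmetric]) (intro summable_mult summ1[OF z])
  also have "\<dots> = (\<Sum>n. vv t (Suc n) r / z ^ Suc n)"
    by (simp add: sum_divide_distrib)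
  finally have e1: "mat_app A (sol t z) r = - (\<Sum>n. vv t (Suc n) r / z ^ Suc n)" .
  have "z * sol t z r = - (z * (\<Sum>n. vv t n r / z ^ Suc n))" by (simp add: sol_def)
  also have "z * (\<Sum>n. vv t n r / z ^ Suc n) = (\<Sum>n. z * (vv t n r / z ^ Suc n))"
    by (rule suminf_mult[OF summ1[OF z], symmetric])
  also have "(\<lambda>n. z * (vv t n r / z ^ Suc n)) = (\<lambda>n. vv t n r / z ^ n)"
    using zp by (simp add: fun_eq_iff)
  also have "(\<Sum>n. vv t n r / z ^ n) = vv t 0 r + (\<Sum>n. vv t (Suc n) r / z ^ Suc n)"
    using suminf_split_head[OF summ0[OF z, of t r]] by simp
  finally have e2: "z * sol t z r = - (vv t 0 r + (\<Sum>n. vv t (Suc n) r / z ^ Suc n))" .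
  show ?thesis using e1 e2 by simp
qed

lemma uniq0:
  assumes z: "cmod z > M" and bd: "\<And>r. cmod (d r) \<le> S"
    and h: "\<And>r. mat_app A d r = z * d r"
  shows "d = (\<lambda>_. 0)"
proof -
  have zp: "cmod z > 0" using z M_pos by linarith
  have ind: "cmod (d r) \<le> S * (M / cmod z) ^ n" for n r
  proof (induction n arbitrary: r)
    case 0 then show ?case using bd by simp
  next
    case (Suc n)
    have "cmod z * cmod (d r) = cmod (mat_app A d r)" by (simp add: h norm_mult)
    also have "\<dots> \<le> M * (S * (M / cmod z) ^ n)" by (rule mat_app_bound[OF Suc.IH])
    finally have "cmod (d r) \<le> M * (S * (M / cmod z) ^ n) / cmod z"
      using zp by (simp add: le_divide_eq mult.commute)
    also have "M * (S * (M / cmod z) ^ n) / cmod z = S * (M / cmod z) ^ Suc n"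
      by (simp add: ac_simps)
    finally show ?case .
  qed
  have lim: "(\<lambda>n. S * (M / cmod z) ^ n) \<longlonglongrightarrow> 0"
    using z M_pos zp by (intro tendsto_mult_right_zero LIMSEQ_power_zero) auto
  show ?thesis
  proof
    fix r
    show "d r = 0"
    proof (rule ccontr)
      assume "d r \<noteq> 0"
      hence "cmod (d r) > 0" by simp
      from order_tendstoD(2)[OF lim this] obtain N where "\<forall>n\<ge>N. S * (M / cmod z) ^ n < cmod (d r)"
        unfolding eventually_sequentially by blast
      hence "S * (M / cmod z) ^ N < cmod (d r)" by blast
      with ind[of r N] show False by simp
    qed
  qed
qed

lemma mat_app_diff: "mat_app A (\<lambda>c. x c - y c) r = mat_app A x r - mat_app A y r"
  by (simp add: mat_app_win right_diff_distrib sum_subtractf)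

lemma mat_app_scale: "mat_app A (\<lambda>c. k * x c) r = k * mat_app A x r"
  by (simp add: mat_app_win sum_distrib_left mult.left_commute)

lemma uniq:
  assumes z: "cmod z > M" and bd: "\<And>r. cmod (y r) \<le> S" and bd': "\<And>r. cmod (y' r) \<le> S'"
    and h: "\<And>r. mat_app A y r - z * y r = f r" and h': "\<And>r. mat_app A y' r - z * y' r = f r"
  shows "y = y'"
proof -
  have "(\<lambda>r. y r - y' r) = (\<lambda>_. 0)"
  proof (rule uniq0[OF z])
    fix r
    show "cmod (y r - y' r) \<le> S + S'" using bd[of r] bd'[of r] norm_triangle_ineq4[of "y r" "y' r"] by linarith
    show "mat_app A (\<lambda>r. y r - y' r) r = z * (y r - y' r)"
    proof -
      have "mat_app A (\<lambda>r. y r - y' r) r = mat_app A y r - mat_app A y' r" by (rule mat_app_diff)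
      also have "\<dots> = (f r + z * y r) - (f r + z * y' r)"
        using h[of r] h'[of r] by (metis diff_eq_eq)
      also have "\<dots> = z * (y r - y' r)" by (simp add: right_diff_distrib)
      finally show ?thesis .
    qed
  qed
  hence "\<And>r. y r - y' r = 0" by (rule fun_cong)
  then show ?thesis by (simp add: fun_eq_iff)
qed

lemma sol_decay:
  assumes z: "cmod z \<ge> 2 ^ Suc W * M"
  shows "cmod (sol 0 z r) \<le> (1/2) ^ r * (2 / cmod z)"
proof -
  have two: "(2::real) \<le> 2 ^ Suc W" using one_le_power[of "2::real" W] by simp
  have z2: "cmod z \<ge> 2 * M"
  proof -
    have "2 * M \<le> 2 ^ Suc W * M" using M_pos two by (intro mult_right_mono) auto
    thus ?thesis using z by linarith
  qed
  have zp: "cmod z > 0" using z2 M_pos by linarith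
  define q where "q = M / cmod z"
  have q0: "q \<ge> 0" using M_pos zp by (simp add: q_def)
  have "q * 2 ^ Suc W = (2 ^ Suc W * M) / cmod z" by (simp add: q_def)
  also have "\<dots> \<le> 1" using z zp by (simp add: divide_le_eq_1)
  finally have "q * 2 ^ Suc W \<le> 1" .
  hence qle: "q \<le> (1/2) ^ Suc W" by (simp add: power_one_over le_divide_eq)
  have tb: "cmod (vv 0 n r / z ^ Suc n) \<le> (1/2) ^ r * ((1/2) ^ n / cmod z)" for n
  proof (cases "vv 0 n r = 0")
    case True then show ?thesis by simp
  next
    case False
    hence rn: "r \<le> n * W" using vv_supp by fastforce
    have "cmod (vv 0 n r / z ^ Suc n) = cmod (vv 0 n r) / cmod z ^ n / cmod z"
      by (simp add: norm_divide norm_mult norm_power)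
    also have "\<dots> \<le> M ^ n / cmod z ^ n / cmod z"
      using vv_bound zp by (intro divide_right_mono) auto
    also have "M ^ n / cmod z ^ n = q ^ n" by (simp add: power_divide q_def)
    also have "q ^ n \<le> ((1/2) ^ Suc W) ^ n"
      using qle q0 by (intro power_mono) auto
    also have "((1/2::real) ^ Suc W) ^ n = (1/2) ^ (n * W) * (1/2) ^ n"
    proof -
      have e: "Suc W * n = n * W + n" by simp
      show ?thesis by (simp only: power_mult[symmetric] power_add[symmetric] e)
    qed
    also have "(1/2::real) ^ (n * W) * (1/2) ^ n \<le> (1/2) ^ r * (1/2) ^ n"
      using rn by (intro mult_right_mono power_decreasing) auto
    finally show ?thesis using zp by (simp add: divide_right_mono)
  qed
  have sg: "summable (\<lambda>n. (1/2::real) ^ r * ((1/2) ^ n / cmod z))"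
    by (intro summable_mult summable_divide summable_geometric) simp
  have "cmod (sol 0 z r) = cmod (\<Sum>n. vv 0 n r / z ^ Suc n)" by (simp add: sol_def)
  also have "\<dots> \<le> (\<Sum>n. (1/2::real) ^ r * ((1/2) ^ n / cmod z))"
    by (rule norm_suminf_le[OF tb sg])
  also have "\<dots> = (1/2) ^ r * (2 / cmod z)"
  proof -
    have "(\<Sum>n. (1/2::real) ^ r * ((1/2) ^ n / cmod z)) = (1/2) ^ r * (\<Sum>n. (1/2::real) ^ n / cmod z)"
      by (rule suminf_mult) (intro summable_divide summable_geometric, simp)
    also have "(\<Sum>n. (1/2::real) ^ n / cmod z) = 2 / cmod z"
      using suminf_divide[OF summable_geometric[of "1/2::real"], of "cmod z"] suminf_geometric[of "1/2::real"]
      by simp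
    finally show ?thesis .
  qed
  finally show ?thesis .
qed

lemma sol_l2:
  assumes z: "cmod z \<ge> 2 ^ Suc W * M"
  shows "l2 (sol 0 z)"
  unfolding l2_def
proof (rule summable_comparison_test[of _ "\<lambda>r. (1/4::real) ^ r * (2 / cmod z)^2"])
  show "\<exists>N. \<forall>n\<ge>N. norm ((cmod (sol 0 z n))\<^sup>2) \<le> (1/4) ^ n * (2 / cmod z)\<^sup>2"
  proof (intro exI allI impI)
    fix n
    have "(cmod (sol 0 z n))\<^sup>2 \<le> ((1/2) ^ n * (2 / cmod z))\<^sup>2"
      using sol_decay[OF z, of n] by (intro power_mono) auto
    also have "\<dots> = ((1/2) ^ n)\<^sup>2 * (2 / cmod z)\<^sup>2" by (rule power_mult_distrib)
    also have "((1/2::real) ^ n)\<^sup>2 = (1/4) ^ n"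
      by (simp add: power2_eq_square flip: power_mult_distrib)
    finally show "norm ((cmod (sol 0 z n))\<^sup>2) \<le> (1/4) ^ n * (2 / cmod z)\<^sup>2" by simp
  qed
  show "summable (\<lambda>r. (1/4::real) ^ r * (2 / cmod z)\<^sup>2)"
    by (intro summable_mult2 summable_geometric) simp
qed

end


locale gj =
  fixes p :: "nat \<Rightarrow> real poly" and eps b :: "nat \<Rightarrow> real"
  assumes dat: "gj_data p eps b"
begin

abbreviation off where "off \<equiv> blk_off p"
abbreviation kk where "kk j \<equiv> degree (p j)"

lemma deg_pos: "kk j \<ge> 1" using dat by (simp add: gj_data_def)
lemma monic: "lead_coeff (p j) = 1" using dat by (simp add: gj_data_def)
lemma eps_pm: "eps j = 1 \<or> eps j = -1" using dat by (simp add: gj_data_def)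
lemma b_pos: "b j > 0" using dat by (simp add: gj_data_def)

lemma off_0[simp]: "off 0 = 0" by (simp add: blk_off_def)
lemma off_Suc: "off (Suc j) = off j + kk j" by (simp add: blk_off_def)

lemma off_mono: "j \<le> l \<Longrightarrow> off j + (\<Sum>i\<in>{j..<l}. kk i) = off l"
  unfolding blk_off_def by (metis atLeast0LessThan sum.atLeastLessThan_concat zero_le)

lemma off_strict: "j < l \<Longrightarrow> off (Suc j) \<le> off l"
proof -
  assume "j < l"
  hence "Suc j \<le> l" by simp
  from off_mono[OF this] show ?thesis by linarith
qed

lemma off_ge: "off j \<ge> j"
proof (induction j)
  case (Suc j) then show ?case using off_Suc[of j] deg_pos[of j] by simp
qed simp

lemma blk_at:
  assumes a: "a < kk j"
  shows "blk_idx p (off j + a) = j" "blk_loc p (off j + a) = a"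
proof -
  have "(LEAST j'. off j + a < off (Suc j')) = j"
  proof (rule Least_equality)
    show "off j + a < off (Suc j)" using a off_Suc by simp
  next
    fix y assume y: "off j + a < off (Suc y)"
    show "j \<le> y"
    proof (rule ccontr)
      assume "\<not> j \<le> y" hence "y < j" by simp
      from off_strict[OF this] y show False by simp
    qed
  qed
  thus "blk_idx p (off j + a) = j" by (simp add: blk_idx_def)
  thus "blk_loc p (off j + a) = a" by (simp add: blk_loc_def)
qed

lemma blk_ex: "\<exists>j a. a < kk j \<and> n = off j + a"
proof -
  define J where "J = (LEAST j. n < off (Suc j))"
  have ex: "n < off (Suc n)" using off_ge[of "Suc n"] by simp
  have hJ: "n < off (Suc J)" unfolding J_def by (rule LeastI[of "\<lambda>j. n < off (Suc j)", OF ex])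
  have lJ: "off J \<le> n"
  proof (cases J)
    case 0 then show ?thesis by simp
  next
    case (Suc i)
    have "i < J" using Suc by simp
    hence "\<not> n < off (Suc i)" unfolding J_def by (rule not_less_Least)
    thus ?thesis using Suc by simp
  qed
  show ?thesis
    by (rule exI[of _ J], rule exI[of _ "n - off J"]) (use hJ lJ off_Suc[of J] in auto)
qed

lemma blk_uniq:
  assumes "a < kk j" "d < kk l" "off j + a = off l + d"
  shows "j = l \<and> a = d"
  using blk_at[OF assms(1)] blk_at[OF assms(2)] assms(3) by metis

lemma gjm_at:
  assumes a: "a < kk j" and d: "d < kk l"
  shows "gjm p eps b (off j + a) (off l + d) =
    (if l = j then (if a = Suc d then 1 else 0) - (if d = kk l - 1 then coeff (p j) a else 0)
     else if l = Suc j then (if a = 0 \<and> d = kk l - 1 then eps j * eps (Suc j) * b j else 0)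
     else if j = Suc l then (if a = 0 \<and> d = kk l - 1 then b l else 0)
     else 0)"
  unfolding gjm_def Let_def blk_at[OF a] blk_at[OF d] by simp


lemma blk_of:
  obtains l d where "d < kk l" "n = off l + d"
  using blk_ex by blast

lemma blk_lt: "d < kk l \<Longrightarrow> off l + d < off (Suc l)" by (simp add: off_Suc)

lemma below_block:
  assumes "d < kk l" "l < j" shows "off l + d < off j"
  using blk_lt[OF assms(1)] off_strict[OF assms(2)] by linarith

end

locale gjb = gj +
  fixes K :: nat and Cb bb :: real
  assumes degK: "\<And>j. kk j \<le> K"
    and coefB: "\<And>j a. \<bar>coeff (p j) a\<bar> \<le> Cb"
    and bB: "\<And>j. b j \<le> bb"
begin

definition WW :: nat where "WW = 2 * K"
definition BB :: real where "BB = 1 + Cb + bb"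

lemma gjm_band:
  assumes "r + WW < c \<or> c + WW < r"
  shows "gjm p eps b r c = 0"
proof -
  obtain j a where a: "a < kk j" "r = off j + a" by (rule blk_of)
  obtain l d where d: "d < kk l" "c = off l + d" by (rule blk_of)
  have oj: "off (Suc j) = off j + kk j" "off (Suc (Suc j)) = off j + kk j + kk (Suc j)"
    using off_Suc by auto
  have ol: "off (Suc l) = off l + kk l" "off (Suc (Suc l)) = off l + kk l + kk (Suc l)"
    using off_Suc by auto
  have K: "kk j \<le> K" "kk (Suc j) \<le> K" "kk l \<le> K" "kk (Suc l) \<le> K" using degK by auto
  have nn: "\<not> (l = j \<or> l = Suc j \<or> j = Suc l)"
  proof
    assume "l = j \<or> l = Suc j \<or> j = Suc l"
    then consider "l = j" | "l = Suc j" | "j = Suc l" by blast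
    thus False
    proof cases
      case 1 thus False using assms a d oj ol K unfolding WW_def by simp
    next
      case 2 thus False using assms a d oj ol K unfolding WW_def by simp
    next
      case 3 thus False using assms a d oj ol K unfolding WW_def by simp
    qed
  qed
  thus ?thesis unfolding a d gjm_at[OF a(1) d(1)] by auto
qed

lemma Cb0: "Cb \<ge> 0" using coefB[of 0 0] by linarith
lemma bb0: "bb \<ge> 0" using bB[of 0] b_pos[of 0] by linarith

lemma abs_if_le: "\<bar>x\<bar> \<le> B \<Longrightarrow> \<bar>y\<bar> \<le> B \<Longrightarrow> \<bar>if P then x else y\<bar> \<le> (B::real)"
  by (cases P) simp_all

lemma gjm_bnd: "\<bar>gjm p eps b r c\<bar> \<le> BB"
proof -
  obtain j a where a: "a < kk j" "r = off j + a" by (rule blk_of)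
  obtain l d where d: "d < kk l" "c = off l + d" by (rule blk_of)
  have e: "\<bar>eps j * eps (Suc j) * b j\<bar> = b j"
    using eps_pm[of j] eps_pm[of "Suc j"] b_pos[of j] by auto
  have z: "\<bar>0::real\<bar> \<le> BB" using Cb0 bb0 by (simp add: BB_def)
  have c1: "\<bar>(if a = Suc d then 1 else 0) - (if d = kk l - 1 then coeff (p j) a else 0)\<bar> \<le> BB"
  proof -
    have "\<bar>(if a = Suc d then 1 else 0) - (if d = kk l - 1 then coeff (p j) a else 0)\<bar>
       \<le> \<bar>if a = Suc d then 1 else 0::real\<bar> + \<bar>if d = kk l - 1 then coeff (p j) a else 0\<bar>"
      by (rule abs_triangle_ineq4)
    also have "\<dots> \<le> 1 + Cb" using coefB[of j a] Cb0
      by (intro add_mono) (auto intro!: abs_if_le)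
    finally show ?thesis using bb0 by (simp add: BB_def)
  qed
  have c2: "\<bar>eps j * eps (Suc j) * b j\<bar> \<le> BB" using e bB[of j] Cb0 by (simp add: BB_def)
  have c3: "\<bar>b l\<bar> \<le> BB" using bB[of l] b_pos[of l] Cb0 by (simp add: BB_def)
  have "\<bar>gjm p eps b (off j + a) (off l + d)\<bar> \<le> BB"
    unfolding gjm_at[OF a(1) d(1)]
    by (intro abs_if_le c1 c2 c3 z)
  thus ?thesis using a(2) d(2) by simp
qed

definition T :: "nat \<Rightarrow> nat \<Rightarrow> nat \<Rightarrow> real" where
  "T j r c = (if off j \<le> r \<and> off j \<le> c then gjm p eps b r c else 0)"

lemma BB0: "BB \<ge> 0" using Cb0 bb0 by (simp add: BB_def)

lemma band_T: "band (T j) WW BB"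
proof
  fix r c assume "r + WW < c \<or> c + WW < r"
  thus "T j r c = 0" by (simp add: T_def gjm_band)
next
  fix r c show "\<bar>T j r c\<bar> \<le> BB" by (simp add: T_def gjm_bnd BB0)
qed

lemma T0: "T 0 = gjm p eps b" by (simp add: T_def fun_eq_iff)

lemma row_T:
  assumes a: "a < kk j"
  shows "T j (off j + a) c =
     (if c = off j + a - 1 then (if a = 0 then 0 else 1) else 0)
   + (if c = off j + kk j - 1 then - coeff (p j) a else 0)
   + (if c = off (Suc j) + kk (Suc j) - 1 then (if a = 0 then eps j * eps (Suc j) * b j else 0) else 0)"
proof -
  obtain l d where d: "d < kk l" "c = off l + d" by (rule blk_of)
  have oj: "off (Suc j) = off j + kk j" "off (Suc (Suc j)) = off j + kk j + kk (Suc j)"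
    using off_Suc by auto
  have kp: "kk j \<ge> 1" "kk (Suc j) \<ge> 1" using deg_pos by auto
  define t1 where "t1 = (if c = off j + a - 1 then (if a = 0 then 0 else 1) else (0::real))"
  define t2 where "t2 = (if c = off j + kk j - 1 then - coeff (p j) a else 0)"
  define t3 where "t3 = (if c = off (Suc j) + kk (Suc j) - 1 then (if a = 0 then eps j * eps (Suc j) * b j else 0) else 0)"
  have G: "T j (off j + a) c = t1 + t2 + t3"
  proof -
    consider "l < j" | "l = j" | "l = Suc j" | "Suc (Suc j) \<le> l" by linarith
    then show ?thesis
    proof cases
      case 1
      have cl: "c < off j" using below_block[OF d(1) 1] d(2) by simp
      have "t1 = 0" unfolding t1_def using cl by (cases "a = 0") auto
      moreover have "t2 = 0" unfolding t2_def using cl kp by auto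
      moreover have "t3 = 0" unfolding t3_def using cl kp oj by auto
      moreover have "T j (off j + a) c = 0" using cl by (simp add: T_def)
      ultimately show ?thesis by simp
    next
      case 2
      have "T j (off j + a) c = gjm p eps b (off j + a) (off l + d)" using d by (simp add: T_def 2)
      also have "\<dots> = (if a = Suc d then 1 else 0) - (if d = kk l - 1 then coeff (p j) a else 0)"
        using gjm_at[OF a d(1)] 2 by simp
      finally have e: "T j (off j + a) c = (if a = Suc d then 1 else 0) - (if d = kk j - 1 then coeff (p j) a else 0)"
        using 2 by simp
      have "t1 = (if a = Suc d then 1 else 0)" unfolding t1_def d(2) 2 by (cases a) auto
      moreover have "t2 = - (if d = kk j - 1 then coeff (p j) a else 0)" unfolding t2_def d(2) 2 using kp by auto
      moreover have "t3 = 0" unfolding t3_def d(2) using 2 d(1) kp oj by auto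
      ultimately show ?thesis using e by simp
    next
      case 3
      have "T j (off j + a) c = gjm p eps b (off j + a) (off l + d)" using d 3 oj by (simp add: T_def)
      also have "\<dots> = (if a = 0 \<and> d = kk l - 1 then eps j * eps (Suc j) * b j else 0)"
        using gjm_at[OF a d(1)] 3 by simp
      finally have e: "T j (off j + a) c = (if a = 0 \<and> d = kk (Suc j) - 1 then eps j * eps (Suc j) * b j else 0)"
        using 3 by simp
      have "t1 = 0" unfolding t1_def d(2) 3 oj using a by auto
      moreover have "t2 = 0" unfolding t2_def d(2) 3 oj using a by auto
      moreover have "t3 = (if a = 0 \<and> d = kk (Suc j) - 1 then eps j * eps (Suc j) * b j else 0)"
        unfolding t3_def d(2) 3 using kp d(1) 3 by auto
      ultimately show ?thesis using e by simp
    next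
      case 4
      have "off (Suc (Suc j)) \<le> off l" using off_strict[of "Suc j" l] 4 by simp
      hence cg: "c \<ge> off (Suc (Suc j))" using d by simp
      have "T j (off j + a) c = gjm p eps b (off j + a) (off l + d)" using d cg oj by (simp add: T_def)
      also have "\<dots> = 0" using gjm_at[OF a d(1)] 4 by simp
      finally have e: "T j (off j + a) c = 0" .
      have "t1 = 0" unfolding t1_def using cg oj a by auto
      moreover have "t2 = 0" unfolding t2_def using cg oj a by auto
      moreover have "t3 = 0" unfolding t3_def using cg oj kp by auto
      ultimately show ?thesis using e by simp
    qed
  qed
  then show ?thesis unfolding t1_def t2_def t3_def .
qed

lemma junction:
  assumes r: "r \<ge> off (Suc j)" and c: "off j \<le> c" "c < off (Suc j)"
  shows "gjm p eps b r c = (if r = off (Suc j) \<and> c = off (Suc j) - 1 then b j else 0)"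
proof -
  obtain l a where a: "a < kk l" "r = off l + a" by (rule blk_of)
  obtain j' d where d: "d < kk j'" "c = off j' + d" by (rule blk_of)
  have jj: "j' = j"
  proof (rule ccontr)
    assume "j' \<noteq> j"
    then consider "j' < j" | "j < j'" by linarith
    thus False
    proof cases
      case 1 thus False using below_block[OF d(1) 1] d c by simp
    next
      case 2 thus False using off_strict[OF 2] d c by simp
    qed
  qed
  have lj: "Suc j \<le> l"
  proof (rule ccontr)
    assume "\<not> Suc j \<le> l" hence "l < Suc j" by simp
    thus False using below_block[OF a(1) \<open>l < Suc j\<close>] a r by simp
  qed
  have oj: "off (Suc j) = off j + kk j" using off_Suc by auto
  have kp: "kk j \<ge> 1" using deg_pos by auto
  have g: "gjm p eps b r c = (if l = Suc j then (if a = 0 \<and> d = kk j - 1 then b j else 0) else 0)"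
    using gjm_at[OF a(1), of d j] d(1) a(2) d(2) jj lj by auto
  have e1: "r = off (Suc j) \<longleftrightarrow> l = Suc j \<and> a = 0"
  proof
    assume "r = off (Suc j)"
    thus "l = Suc j \<and> a = 0" using blk_uniq[OF a(1), of 0 "Suc j"] a(2) deg_pos[of "Suc j"] by simp
  qed (use a in simp)
  have e2: "c = off (Suc j) - 1 \<longleftrightarrow> d = kk j - 1" using d jj oj kp by auto
  show ?thesis using g e1 e2 by auto
qed

end


lemma mat_app3:
  assumes "\<And>c. A r c = (if c = c1 then a1 else 0) + (if c = c2 then a2 else 0) + (if c = c3 then a3 else 0)"
  shows "mat_app A x r = of_real a1 * x c1 + of_real a2 * x c2 + of_real a3 * x c3"
proof -
  have eq: "(\<lambda>c. complex_of_real (A r c) * x c) =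
     (\<lambda>c. ((if c = c1 then of_real a1 * x c1 else 0) + (if c = c2 then of_real a2 * x c2 else 0))
          + (if c = c3 then of_real a3 * x c3 else 0))"
    by (rule ext) (simp add: assms distrib_right)
  have "(\<lambda>c. complex_of_real (A r c) * x c) sums (of_real a1 * x c1 + of_real a2 * x c2 + of_real a3 * x c3)"
    unfolding eq by (intro sums_add sums_single)
  thus ?thesis unfolding mat_app_def by (rule sums_unique[symmetric])
qed

lemma tri_solve:
  fixes q :: "real poly" and \<delta> :: "nat \<Rightarrow> real"
  shows "\<exists>f. \<forall>j<n. f j + (\<Sum>c<j. coeff q (k - j + c) * f c) = \<delta> j"
proof (induction n)
  case 0 show ?case by simp
next
  case (Suc n)
  then obtain f where f: "\<forall>j<n. f j + (\<Sum>c<j. coeff q (k - j + c) * f c) = \<delta> j" by blast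
  define g where "g = f(n := \<delta> n - (\<Sum>c<n. coeff q (k - n + c) * f c))"
  have "\<forall>j<Suc n. g j + (\<Sum>c<j. coeff q (k - j + c) * g c) = \<delta> j"
  proof (intro allI impI)
    fix j assume j: "j < Suc n"
    have s: "(\<Sum>c<j. coeff q (k - j + c) * g c) = (\<Sum>c<j. coeff q (k - j + c) * f c)"
      using j by (intro sum.cong) (auto simp: g_def)
    show "g j + (\<Sum>c<j. coeff q (k - j + c) * g c) = \<delta> j"
    proof (cases "j = n")
      case True then show ?thesis using s by (simp add: g_def)
    next
      case False then show ?thesis using s f j by (simp add: g_def)
    qed
  qed
  then show ?case by blast
qed

lemma symm_inv_row0:
  fixes q :: "real poly"
  assumes mon: "lead_coeff q = 1" and k: "degree q \<ge> 1" and d: "d < degree q"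
  shows "symm_inv q 0 d = (if d = degree q - 1 then 1 else 0)"
proof -
  define k where "k = degree q"
  have ex: "\<exists>F. \<forall>a<k. \<forall>d<k. (\<Sum>c<k. symm q a c * F c d) = (if a = d then 1 else 0)"
  proof -
    have "\<forall>d. \<exists>f. \<forall>a<k. (\<Sum>c<k. symm q a c * f c) = (if a = d then 1 else 0)"
    proof
      fix d
      obtain f where f: "\<forall>j<k. f j + (\<Sum>c<j. coeff q (k - j + c) * f c) = (if k - 1 - j = d then 1 else 0)"
        using tri_solve[where q=q and n=k and k=k and \<delta>="\<lambda>j. if k - 1 - j = d then 1 else 0"] by blast
      have "\<forall>a<k. (\<Sum>c<k. symm q a c * f c) = (if a = d then 1 else 0)"
      proof (intro allI impI)
        fix a assume a: "a < k"
        define j where "j = k - 1 - a"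
        have jk: "j < k" "a = k - 1 - j" using a by (auto simp: j_def)
        have "(\<Sum>c<k. symm q a c * f c) = (\<Sum>c<Suc j. symm q a c * f c)"
        proof (rule sum.mono_neutral_right)
          show "\<forall>i\<in>{..<k} - {..<Suc j}. symm q a i * f i = 0"
          proof
            fix i assume "i \<in> {..<k} - {..<Suc j}"
            hence "a + i + 1 > degree q" using jk by (auto simp: k_def)
            thus "symm q a i * f i = 0" by (simp add: symm_def coeff_eq_0)
          qed
        qed (use jk in auto)
        also have "\<dots> = symm q a j * f j + (\<Sum>c<j. symm q a c * f c)" by simp
        also have "symm q a j = 1" using jk mon k by (simp add: symm_def k_def)
        also have "(\<Sum>c<j. symm q a c * f c) = (\<Sum>c<j. coeff q (k - j + c) * f c)"
        proof (intro sum.cong refl)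
          fix c have "a + c + 1 = k - j + c" using jk by simp
          thus "symm q a c * f c = coeff q (k - j + c) * f c" unfolding symm_def by metis
        qed
        also have "1 * f j + \<dots> = (if k - 1 - j = d then 1 else 0)" using f jk by simp
        finally show "(\<Sum>c<k. symm q a c * f c) = (if a = d then 1 else 0)" using jk by simp
      qed
      then show "\<exists>f. \<forall>a<k. (\<Sum>c<k. symm q a c * f c) = (if a = d then 1 else 0)" by blast
    qed
    then obtain f where "\<forall>d. \<forall>a<k. (\<Sum>c<k. symm q a c * f d c) = (if a = d then 1 else 0)"
      by metis
    then show ?thesis by (intro exI[of _ "\<lambda>c d. f d c"]) blast
  qed
  have S: "\<forall>a<k. \<forall>d<k. (\<Sum>c<k. symm q a c * symm_inv q c d) = (if a = d then 1 else 0)"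
    unfolding symm_inv_def k_def[symmetric] by (rule someI_ex[OF ex])
  have km: "k - 1 < k" using k by (simp add: k_def)
  have "(\<Sum>c<k. symm q (k - 1) c * symm_inv q c d) = (\<Sum>c\<in>{0}. symm q (k - 1) c * symm_inv q c d)"
  proof (rule sum.mono_neutral_right)
    show "\<forall>i\<in>{..<k} - {0}. symm q (k - 1) i * symm_inv q i d = 0"
    proof
      fix i assume "i \<in> {..<k} - {0}"
      hence "k - 1 + i + 1 > degree q" using k by (auto simp: k_def)
      thus "symm q (k - 1) i * symm_inv q i d = 0" by (simp add: symm_def coeff_eq_0)
    qed
  qed (use km in auto)
  also have "\<dots> = symm_inv q 0 d" using mon k by (simp add: symm_def k_def)
  finally show ?thesis using S km d by (auto simp: k_def)
qed


context gjb
begin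

definition M0 where "M0 = band.M WW BB"
definition RR where "RR = 2 ^ Suc WW * M0"
definition X where "X j z = band.sol (T j) WW (off j) z"
definition mu where "mu j z = X j z (off (Suc j) - 1)"

lemma M0_ge: "M0 \<ge> 1" unfolding M0_def by (rule band.M_pos[OF band_T])

lemma RR_ge: "RR \<ge> 2 * M0"
proof -
  have "(2::real) \<le> 2 ^ Suc WW" using one_le_power[of "2::real" WW] by simp
  thus ?thesis unfolding RR_def using M0_ge by (intro mult_right_mono) auto
qed

lemma RR_pos: "RR > 0" using RR_ge M0_ge by linarith

lemma X_eq:
  assumes "cmod z \<ge> RR"
  shows "mat_app (T j) (X j z) r - z * X j z r = (if r = off j then 1 else 0)"
  unfolding X_def by (rule band.sol_eq[OF band_T]) (use assms RR_ge in \<open>auto simp: M0_def\<close>)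

lemma X_bnd:
  assumes "cmod z \<ge> RR"
  shows "cmod (X j z r) \<le> 2 / cmod z"
  unfolding X_def by (rule band.sol_bound[OF band_T]) (use assms RR_ge in \<open>auto simp: M0_def\<close>)

lemma uniqT:
  assumes z: "cmod z \<ge> RR" and bd: "\<And>r. cmod (y r) \<le> S" and bd': "\<And>r. cmod (y' r) \<le> S'"
    and h: "\<And>r. mat_app (T j) y r - z * y r = f r" and h': "\<And>r. mat_app (T j) y' r - z * y' r = f r"
  shows "y = y'"
proof (rule band.uniq[OF band_T _ bd bd' h h'])
  show "cmod z > band.M WW BB" using z RR_ge M0_ge unfolding M0_def by linarith
qed

lemma T_low: "r < off j \<Longrightarrow> T j r c = 0" by (simp add: T_def)

lemma X_junction:
  assumes z: "cmod z \<ge> RR" and r: "r \<ge> off (Suc j)"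
  shows "X j z r = (- of_real (b j) * mu j z) * X (Suc j) z r"
proof -
  define u where "u = mu j z"
  define w where "w = (\<lambda>r. if off (Suc j) \<le> r then X j z r else 0)"
  have kp: "kk j \<ge> 1" using deg_pos by auto
  have oS: "off (Suc j) = off j + kk j" by (rule off_Suc)
  have weq: "mat_app (T (Suc j)) w r - z * w r = (- of_real (b j) * u) * (if r = off (Suc j) then 1 else 0)" for r
  proof (cases "r < off (Suc j)")
    case True
    have "mat_app (T (Suc j)) w r = 0" unfolding mat_app_def using T_low[OF True] by simp
    then show ?thesis using True by (simp add: w_def)
  next
    case False
    hence rS: "off (Suc j) \<le> r" by simp
    have pw: "complex_of_real (T j r c) * X j z c =
        complex_of_real (T (Suc j) r c) * w c
        + (if c = off (Suc j) - 1 then complex_of_real (if r = off (Suc j) then b j else 0) * X j z (off (Suc j) - 1) else 0)"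
      for c
    proof -
      consider "c < off j" | "off j \<le> c \<and> c < off (Suc j)" | "off (Suc j) \<le> c" by linarith
      then show ?thesis
      proof cases
        case 1
        have "c \<noteq> off (Suc j) - 1" using 1 oS kp by linarith
        then show ?thesis using 1 oS by (simp add: T_def w_def)
      next
        case 2
        have "T j r c = gjm p eps b r c" using 2 rS oS by (simp add: T_def)
        also have "\<dots> = (if r = off (Suc j) \<and> c = off (Suc j) - 1 then b j else 0)"
          using junction[OF rS] 2 by blast
        finally have "T j r c = (if r = off (Suc j) \<and> c = off (Suc j) - 1 then b j else 0)" .
        moreover have "T (Suc j) r c = 0" using 2 by (simp add: T_def)
        ultimately show ?thesis by auto
      next
        case 3
        have "c \<noteq> off (Suc j) - 1" using 3 oS kp by linarith
        moreover have "T j r c = T (Suc j) r c" using 3 rS oS by (simp add: T_def)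
        ultimately show ?thesis using 3 by (simp add: w_def)
      qed
    qed
    have s1: "(\<lambda>c. complex_of_real (T (Suc j) r c) * w c) sums mat_app (T (Suc j)) w r"
      unfolding mat_app_def by (rule summable_sums[OF band.summable_row[OF band_T]])
    have s2: "(\<lambda>c. if c = off (Suc j) - 1 then complex_of_real (if r = off (Suc j) then b j else 0) * X j z (off (Suc j) - 1) else 0)
        sums (complex_of_real (if r = off (Suc j) then b j else 0) * X j z (off (Suc j) - 1))"
      by (rule sums_single)
    have "(\<lambda>c. complex_of_real (T j r c) * X j z c) sums
        (mat_app (T (Suc j)) w r + complex_of_real (if r = off (Suc j) then b j else 0) * X j z (off (Suc j) - 1))"
      unfolding pw by (rule sums_add[OF s1 s2])
    hence ma: "mat_app (T j) (X j z) r = mat_app (T (Suc j)) w r + complex_of_real (if r = off (Suc j) then b j else 0) * u"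
      unfolding mat_app_def u_def mu_def by (rule sums_unique[symmetric])
    have "r \<noteq> off j" using rS oS kp by linarith
    hence h0: "mat_app (T j) (X j z) r - z * X j z r = 0" using X_eq[OF z, of j r] by simp
    have wr: "w r = X j z r" using rS by (simp add: w_def)
    have "mat_app (T (Suc j)) w r - z * w r
        = (mat_app (T j) (X j z) r - z * X j z r) - complex_of_real (if r = off (Suc j) then b j else 0) * u"
      unfolding ma wr by simp
    also have "\<dots> = - (complex_of_real (if r = off (Suc j) then b j else 0) * u)" using h0 by simp
    finally show ?thesis by (cases "r = off (Suc j)") simp_all
  qed
  have seq: "mat_app (T (Suc j)) (\<lambda>r. (- of_real (b j) * u) * X (Suc j) z r) r
      - z * ((- of_real (b j) * u) * X (Suc j) z r) = (- of_real (b j) * u) * (if r = off (Suc j) then 1 else 0)" for r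
  proof -
    have "mat_app (T (Suc j)) (\<lambda>r. (- of_real (b j) * u) * X (Suc j) z r) r
       = (- of_real (b j) * u) * mat_app (T (Suc j)) (X (Suc j) z) r"
      by (rule band.mat_app_scale[OF band_T])
    then show ?thesis using X_eq[OF z, of "Suc j" r] by (simp add: algebra_simps)
  qed
  have "w = (\<lambda>r. (- of_real (b j) * u) * X (Suc j) z r)"
  proof (rule uniqT[OF z _ _ weq seq])
    fix r show "cmod (w r) \<le> 2 / cmod z" using X_bnd[OF z] RR_pos z by (simp add: w_def)
  next
    fix r show "cmod ((- of_real (b j) * u) * X (Suc j) z r) \<le> cmod (- of_real (b j) * u) * (2 / cmod z)"
      unfolding norm_mult[of _ "X (Suc j) z r"] using X_bnd[OF z, of "Suc j" r] by (intro mult_left_mono) auto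
  qed
  hence "w r = (- of_real (b j) * u) * X (Suc j) z r" by simp
  then show ?thesis using r by (simp add: w_def u_def)
qed

end


context gjb
begin

lemma row_eq:
  assumes z: "cmod z \<ge> RR" and a: "a < kk j"
  shows "(if a = 0 then 0 else X j z (off j + a - 1)) - of_real (coeff (p j) a) * X j z (off j + kk j - 1)
     + (if a = 0 then of_real (eps j * eps (Suc j) * b j) * X j z (off (Suc j) + kk (Suc j) - 1) else 0)
     - z * X j z (off j + a) = (if a = 0 then 1 else 0)"
proof -
  have "mat_app (T j) (X j z) (off j + a) =
     of_real (if a = 0 then 0 else 1) * X j z (off j + a - 1)
     + of_real (- coeff (p j) a) * X j z (off j + kk j - 1)
     + of_real (if a = 0 then eps j * eps (Suc j) * b j else 0) * X j z (off (Suc j) + kk (Suc j) - 1)"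
    by (rule mat_app3) (rule row_T[OF a])
  moreover have "mat_app (T j) (X j z) (off j + a) - z * X j z (off j + a) = (if a = 0 then 1 else 0)"
    using X_eq[OF z, of j "off j + a"] by simp
  ultimately show ?thesis by (cases "a = 0") simp_all
qed

lemma tele:
  assumes z: "cmod z \<ge> RR" and m: "m < kk j"
  shows "1 = of_real (eps j * eps (Suc j) * b j) * X j z (off (Suc j) + kk (Suc j) - 1)
     - (\<Sum>i\<le>m. of_real (coeff (p j) i) * z ^ i) * X j z (off j + kk j - 1)
     - z ^ Suc m * X j z (off j + m)"
  using m
proof (induction m)
  case 0
  show ?case using row_eq[OF z 0] by (simp add: algebra_simps)
next
  case (Suc m)
  have IH: "1 = of_real (eps j * eps (Suc j) * b j) * X j z (off (Suc j) + kk (Suc j) - 1)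
     - (\<Sum>i\<le>m. of_real (coeff (p j) i) * z ^ i) * X j z (off j + kk j - 1)
     - z ^ Suc m * X j z (off j + m)" using Suc by simp
  have r: "X j z (off j + m) - of_real (coeff (p j) (Suc m)) * X j z (off j + kk j - 1)
     - z * X j z (off j + Suc m) = 0"
    using row_eq[OF z Suc.prems] by simp
  hence xm: "X j z (off j + m) = of_real (coeff (p j) (Suc m)) * X j z (off j + kk j - 1) + z * X j z (off j + Suc m)"
    by (simp add: algebra_simps)
  show ?case using IH unfolding xm by (simp add: algebra_simps)
qed

lemma poly_split:
  "poly (map_poly complex_of_real (p j)) z = (\<Sum>i\<le>kk j - 1. of_real (coeff (p j) i) * z ^ i) + z ^ kk j"
proof -
  have dm: "degree (map_poly complex_of_real (p j)) = kk j" by (rule degree_map_poly) simp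
  have kp: "kk j \<ge> 1" using deg_pos by auto
  have "poly (map_poly complex_of_real (p j)) z = (\<Sum>i\<le>kk j. of_real (coeff (p j) i) * z ^ i)"
    by (simp add: poly_altdef dm coeff_map_poly)
  also have "{..kk j} = insert (kk j) {..kk j - 1}" using kp by auto
  also have "(\<Sum>i\<in>insert (kk j) {..kk j - 1}. of_real (coeff (p j) i) * z ^ i)
     = of_real (coeff (p j) (kk j)) * z ^ kk j + (\<Sum>i\<le>kk j - 1. of_real (coeff (p j) i) * z ^ i)"
    using kp by (subst sum.insert) auto
  also have "coeff (p j) (kk j) = 1" using monic[of j] by simp
  finally show ?thesis by simp
qed

lemma mu_rec:
  assumes z: "cmod z \<ge> RR"
  shows "1 = - mu j z * (poly (map_poly of_real (p j)) z
            + of_real (eps j * eps (Suc j) * (b j)\<^sup>2) * mu (Suc j) z)"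
proof -
  have kp: "kk j \<ge> 1" "kk (Suc j) \<ge> 1" using deg_pos by auto
  have oS: "off (Suc j) = off j + kk j" "off (Suc (Suc j)) = off (Suc j) + kk (Suc j)" using off_Suc by auto
  have u: "X j z (off j + kk j - 1) = mu j z" unfolding mu_def using oS by simp
  have um: "X j z (off j + (kk j - 1)) = mu j z" using u kp by simp
  have y: "X j z (off (Suc j) + kk (Suc j) - 1) = (- of_real (b j) * mu j z) * mu (Suc j) z"
  proof -
    have "X j z (off (Suc j) + kk (Suc j) - 1) = (- of_real (b j) * mu j z) * X (Suc j) z (off (Suc j) + kk (Suc j) - 1)"
      by (rule X_junction[OF z]) (use kp in simp)
    also have "X (Suc j) z (off (Suc j) + kk (Suc j) - 1) = mu (Suc j) z" unfolding mu_def using oS by simp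
    finally show ?thesis .
  qed
  have "1 = of_real (eps j * eps (Suc j) * b j) * ((- of_real (b j) * mu j z) * mu (Suc j) z)
     - (\<Sum>i\<le>kk j - 1. of_real (coeff (p j) i) * z ^ i) * mu j z
     - z ^ Suc (kk j - 1) * mu j z"
    using tele[OF z, of "kk j - 1" j] kp unfolding u um y by simp
  also have "z ^ Suc (kk j - 1) = z ^ kk j" using kp by simp
  finally have "1 = of_real (eps j * eps (Suc j) * b j) * ((- of_real (b j) * mu j z) * mu (Suc j) z)
     - ((\<Sum>i\<le>kk j - 1. of_real (coeff (p j) i) * z ^ i) + z ^ kk j) * mu j z"
    by (simp add: algebra_simps)
  moreover have gen: "\<And>(c::complex) bb u m S Z. 1 = c * (- bb * u * m) - (S + Z) * u \<Longrightarrow> 1 = - u * (S + Z + c * bb * m)"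
    by algebra
  moreover have "complex_of_real (eps j * eps (Suc j) * (b j)\<^sup>2) = complex_of_real (eps j * eps (Suc j) * b j) * complex_of_real (b j)"
    by (simp add: power2_eq_square)
  ultimately show ?thesis unfolding poly_split by (metis (no_types, lifting) mult.assoc)
qed

lemma mu_bnd: "cmod z \<ge> RR \<Longrightarrow> cmod (mu j z) \<le> 2 / cmod z"
  unfolding mu_def by (rule X_bnd)

end


lemma l2_bounded:
  assumes "l2 x" shows "cmod (x r) \<le> sqrt (\<Sum>n. (cmod (x n))\<^sup>2)"
proof -
  have "(\<Sum>n\<in>{r}. (cmod (x n))\<^sup>2) \<le> (\<Sum>n. (cmod (x n))\<^sup>2)"
    using assms unfolding l2_def by (intro sum_le_suminf) auto
  hence "(cmod (x r))\<^sup>2 \<le> (\<Sum>n. (cmod (x n))\<^sup>2)" by simp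
  thus ?thesis by (metis norm_ge_zero real_le_rsqrt)
qed

context gjb
begin

lemma X0_eq:
  assumes z: "cmod z \<ge> RR"
  shows "mat_app (gjm p eps b) (X 0 z) r - z * X 0 z r = e0 r"
  using X_eq[OF z, of 0 r] by (simp add: T0 e0_def)

lemma X0_l2:
  assumes z: "cmod z \<ge> RR"
  shows "l2 (X 0 z)"
  unfolding X_def off_0 by (rule band.sol_l2[OF band_T]) (use z in \<open>simp add: RR_def M0_def\<close>)

lemma resolvent_X0:
  assumes z: "cmod z \<ge> RR"
  shows "resolvent_e (gjm p eps b) z = X 0 z"
  unfolding resolvent_e_def
proof (rule the_equality)
  show "l2 (X 0 z) \<and> (\<forall>r. mat_app (gjm p eps b) (X 0 z) r - z * X 0 z r = e0 r)"
    using X0_l2[OF z] X0_eq[OF z] by blast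
next
  fix x assume h: "l2 x \<and> (\<forall>r. mat_app (gjm p eps b) x r - z * x r = e0 r)"
  show "x = X 0 z"
  proof (rule uniqT[OF z, of x _ "X 0 z" _ 0])
    fix r show "cmod (x r) \<le> sqrt (\<Sum>n. (cmod (x n))\<^sup>2)" using h l2_bounded by blast
    show "cmod (X 0 z r) \<le> 2 / cmod z" using X_bnd[OF z] .
    show "mat_app (T 0) x r - z * x r = e0 r" using h by (simp add: T0)
    show "mat_app (T 0) (X 0 z) r - z * X 0 z r = e0 r" using X0_eq[OF z] by (simp add: T0)
  qed
qed

lemma blk0: "blk_idx p 0 = 0" "blk_loc p 0 = 0"
  using blk_at[of 0 0] deg_pos[of 0] by auto

lemma Gmat0: "Gmat p eps 0 c = (if c = kk 0 - 1 then eps 0 else 0)"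
proof -
  obtain l d where d: "d < kk l" "c = off l + d" by (rule blk_of)
  show ?thesis
  proof (cases "l = 0")
    case True
    have "Gmat p eps 0 c = eps 0 * symm_inv (p 0) 0 d"
      unfolding Gmat_def blk0 using blk_at[OF d(1)] d True by simp
    also have "\<dots> = eps 0 * (if d = kk 0 - 1 then 1 else 0)"
      using symm_inv_row0[OF monic deg_pos] d True by simp
    finally show ?thesis using d True by simp
  next
    case False
    have "Gmat p eps 0 c = 0" unfolding Gmat_def blk0 using blk_at[OF d(1)] d False by simp
    moreover have "off 1 \<le> off l" using off_strict[of 0 l] False by simp
    moreover have "off 1 = kk 0" using off_Suc[of 0] by simp
    ultimately show ?thesis using d deg_pos[of 0] by auto
  qed
qed

lemma mfun_mu:
  assumes z: "cmod z \<ge> RR"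
  shows "mfun p eps b z = of_real (eps 0) * mu 0 z"
proof -
  have "mfun p eps b z = (\<Sum>n. mat_app (Gmat p eps) (X 0 z) n * cnj (e0 n))"
    unfolding mfun_def indef_ip_def resolvent_X0[OF z] ..
  also have "\<dots> = (\<Sum>n\<in>{0}. mat_app (Gmat p eps) (X 0 z) n * cnj (e0 n))"
    by (rule suminf_finite) (auto simp: e0_def)
  also have "\<dots> = mat_app (Gmat p eps) (X 0 z) 0" by (simp add: e0_def)
  also have "\<dots> = of_real (eps 0) * X 0 z (kk 0 - 1) + of_real 0 * X 0 z 0 + of_real 0 * X 0 z 0"
    by (rule mat_app3) (simp add: Gmat0)
  also have "X 0 z (kk 0 - 1) = mu 0 z" unfolding mu_def using off_Suc[of 0] by simp
  finally show ?thesis by simp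
qed

end


lemma per_mod:
  fixes f :: "nat \<Rightarrow> 'a" and j :: nat
  assumes s: "s > 0" and per: "\<And>j. f (j + s) = f j"
  shows "f j = f (j mod s)"
proof (induction j rule: less_induct)
  case (less j)
  show ?case
  proof (cases "j < s")
    case True then show ?thesis by simp
  next
    case False
    hence "j = (j - s) + s" by simp
    hence "f j = f (j - s)" using per by metis
    also have "\<dots> = f ((j - s) mod s)" using less s False by simp
    also have "(j - s) mod s = j mod s" using False by (simp add: le_mod_geq)
    finally show ?thesis .
  qed
qed

lemma periodic_bounds:
  assumes d: "gj_data p eps b" and per: "gj_periodic p eps b"
  shows "\<exists>K Cb bb. gjb p eps b K Cb bb"
proof -
  obtain s where s: "s > 0" "\<And>j. p (j + s) = p j" "\<And>j. b (j + s) = b j"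
    using per unfolding gj_periodic_def by blast
  have pm: "p j = p (j mod s)" for j by (rule per_mod[where f=p, OF s(1) s(2)])
  have bm: "b j = b (j mod s)" for j by (rule per_mod[where f=b, OF s(1) s(3)])
  define K where "K = (\<Sum>i<s. degree (p i))"
  define Cb where "Cb = (\<Sum>i<s. \<Sum>a\<le>K. \<bar>coeff (p i) a\<bar>)"
  define bb where "bb = (\<Sum>i<s. b i)"
  have bpos: "b i > 0" for i using d by (simp add: gj_data_def)
  have jm: "j mod s < s" for j using s(1) by simp
  have degK: "degree (p j) \<le> K" for j
  proof -
    have "degree (p (j mod s)) \<le> K" unfolding K_def
      by (rule member_le_sum) (use jm in auto)
    thus ?thesis using pm[of j] by simp
  qed
  have Cb0: "Cb \<ge> 0" unfolding Cb_def by (intro sum_nonneg) auto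
  have coefB: "\<bar>coeff (p j) a\<bar> \<le> Cb" for j a
  proof (cases "a \<le> K")
    case True
    have "\<bar>coeff (p (j mod s)) a\<bar> \<le> (\<Sum>a'\<le>K. \<bar>coeff (p (j mod s)) a'\<bar>)"
      by (rule member_le_sum) (use True in auto)
    also have "\<dots> \<le> Cb" unfolding Cb_def
      by (rule member_le_sum[where f = "\<lambda>i. \<Sum>a\<le>K. \<bar>coeff (p i) a\<bar>"]) (use jm in \<open>auto intro: sum_nonneg\<close>)
    finally show ?thesis using pm[of j] by simp
  next
    case False
    hence "a > degree (p j)" using degK[of j] by simp
    thus ?thesis using Cb0 by (simp add: coeff_eq_0)
  qed
  have bB: "b j \<le> bb" for j
  proof -
    have "b (j mod s) \<le> bb" unfolding bb_def
      by (rule member_le_sum) (use jm bpos in \<open>auto intro: less_imp_le\<close>)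
    thus ?thesis using bm[of j] by simp
  qed
  have "gjb p eps b K Cb bb"
    by (unfold_locales) (use d degK coefB bB in auto)
  thus ?thesis by blast
qed

theorem theorem2p10:
  fixes p p' :: "nat \<Rightarrow> real poly" and eps eps' b b' :: "nat \<Rightarrow> real"
  assumes "gj_data p eps b" and "gj_periodic p eps b"
    and "gj_data p' eps' b'" and "gj_periodic p' eps' b'"
    and "\<exists>R. \<forall>z. cmod z > R \<longrightarrow> mfun p eps b z = mfun p' eps' b' z"
  shows "gjm p eps b = gjm p' eps' b'"
proof -
  obtain K Cb bb where I1: "gjb p eps b K Cb bb" using periodic_bounds[OF assms(1,2)] by blast
  obtain K' Cb' bb' where I2: "gjb p' eps' b' K' Cb' bb'" using periodic_bounds[OF assms(3,4)] by blast
  interpret g1: gjb p eps b K Cb bb by (rule I1)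
  interpret g2: gjb p' eps' b' K' Cb' bb' by (rule I2)
  obtain R where R: "\<forall>z. cmod z > R \<longrightarrow> mfun p eps b z = mfun p' eps' b' z" using assms(5) by blast
  define R0 where "R0 = max g1.RR g2.RR"
  have R0p: "R0 > 0" using g1.RR_pos unfolding R0_def by linarith
  have epsnz: "eps' 0 \<noteq> 0" using g2.eps_pm[of 0] by auto
  interpret ts: twoseq p p' "\<lambda>j. eps j * eps (Suc j) * (b j)\<^sup>2" "\<lambda>j. eps' j * eps' (Suc j) * (b' j)\<^sup>2"
    g1.mu g2.mu R0
  proof
    fix j
    show "lead_coeff (p j) = 1" by (rule g1.monic)
    show "lead_coeff (p' j) = 1" by (rule g2.monic)
    show "eps j * eps (Suc j) * (b j)\<^sup>2 \<noteq> 0"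
      using g1.eps_pm[of j] g1.eps_pm[of "Suc j"] g1.b_pos[of j] by auto
    show "eps' j * eps' (Suc j) * (b' j)\<^sup>2 \<noteq> 0"
      using g2.eps_pm[of j] g2.eps_pm[of "Suc j"] g2.b_pos[of j] by auto
  next
    show "R0 > 0" by (rule R0p)
  next
    fix j z assume z: "cmod z \<ge> R0"
    show "1 = - g1.mu j z * (poly (map_poly of_real (p j)) z + of_real (eps j * eps (Suc j) * (b j)\<^sup>2) * g1.mu (Suc j) z)"
      by (rule g1.mu_rec) (use z in \<open>simp add: R0_def\<close>)
    show "1 = - g2.mu j z * (poly (map_poly of_real (p' j)) z + of_real (eps' j * eps' (Suc j) * (b' j)\<^sup>2) * g2.mu (Suc j) z)"
      by (rule g2.mu_rec) (use z in \<open>simp add: R0_def\<close>)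
    show "cmod (g1.mu j z) \<le> 2 / cmod z" by (rule g1.mu_bnd) (use z in \<open>simp add: R0_def\<close>)
    show "cmod (g2.mu j z) \<le> 2 / cmod z" by (rule g2.mu_bnd) (use z in \<open>simp add: R0_def\<close>)
  qed
  have base: "\<forall>z. cmod z \<ge> max (R + 1) R0 \<longrightarrow> g2.mu 0 z = of_real (eps 0 / eps' 0) * g1.mu 0 z"
  proof (intro allI impI)
    fix z assume z: "cmod z \<ge> max (R + 1) R0"
    have "of_real (eps 0) * g1.mu 0 z = of_real (eps' 0) * g2.mu 0 z"
      using R z g1.mfun_mu[of z] g2.mfun_mu[of z] by (simp add: R0_def)
    thus "g2.mu 0 z = of_real (eps 0 / eps' 0) * g1.mu 0 z" using epsnz by (simp add: field_simps)
  qed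
  have lnz: "complex_of_real (eps 0 / eps' 0) \<noteq> 0" using g1.eps_pm[of 0] g2.eps_pm[of 0] by auto
  have M: "p j = p' j \<and> eps j * eps (Suc j) * (b j)\<^sup>2 = eps' j * eps' (Suc j) * (b' j)\<^sup>2" for j
    by (rule ts.main[OF lnz base])
  have pp: "p = p'" using M by blast
  have bE: "b j = b' j \<and> eps j * eps (Suc j) * b j = eps' j * eps' (Suc j) * b' j" for j
  proof -
    have a: "\<bar>eps j * eps (Suc j)\<bar> = 1" "\<bar>eps' j * eps' (Suc j)\<bar> = 1"
      using g1.eps_pm[of j] g1.eps_pm[of "Suc j"] g2.eps_pm[of j] g2.eps_pm[of "Suc j"] by auto
    have e: "eps j * eps (Suc j) * (b j)\<^sup>2 = eps' j * eps' (Suc j) * (b' j)\<^sup>2" using M by blast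
    hence "\<bar>eps j * eps (Suc j)\<bar> * (b j)\<^sup>2 = \<bar>eps' j * eps' (Suc j)\<bar> * (b' j)\<^sup>2"
      by (metis abs_mult abs_power2)
    hence "(b j)\<^sup>2 = (b' j)\<^sup>2" using a by simp
    hence bb: "b j = b' j" using g1.b_pos[of j] g2.b_pos[of j] by (simp add: power2_eq_iff_nonneg)
    hence "eps j * eps (Suc j) = eps' j * eps' (Suc j)" using e g1.b_pos[of j] by simp
    thus ?thesis using bb by simp
  qed
  have bb: "b = b'" using bE by blast
  have ee: "\<And>j. eps j * eps (Suc j) * b' j = eps' j * eps' (Suc j) * b' j" using bE bb by simp
  show ?thesis unfolding pp bb gjm_def Let_def ee by (rule refl)
qed

end
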